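(* Let $(X,\tau)$ be a topological space and $\mathcal{F}:\mathcal{O}(X)^{\mathrm{op}}\to\mathbf{Set}$ a presheaf. Then: (1) $B^1_{\mathcal{F}}$ is a base of compact open sets for $(\Lambda^1_{\mathcal{F}},\tau^1_{\mathcal{F}})$; hence $(\Lambda^1_{\mathcal{F}},\tau^1_{\mathcal{F}})$ is locally compact; (2) for every $G\in\mathrm{St}(\mathrm{RO}(X))$ the stalk $\mathcal{F}_G$ is a discrete and closed subspace of $\Lambda^1_{\mathcal{F}}$; (3) $p^1_{\mathcal{F}}:\Lambda^1_{\mathcal{F}}\to\mathrm{St}(\mathrm{RO}(X))$ is continuous, and for every $U\in\mathcal{O}(X)$ and $f\in\mathcal{F}(U)$, $\dot f$ is a local section of $p^1_{\mathcal{F}}$ over $N_{\mathrm{Reg}(U)}$; hence $\Lambda^1_{\mathcal{F}}$ is an étalé space over $\mathrm{St}(\mathrm{RO}(X))$; (4) $\Lambda^1_{\mathcal{F}}$ is Hausdorff and zero-dimensional, in particular Tychonoff; (5) if $\Lambda^1_{\mathcal{F}}$ has an infinite stalk, then it is non-compact.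
   Context: $\mathcal{O}(X)$ is the set of non-empty open subsets of $X$ ordered by inclusion; for $f\in\mathcal{F}(V)$ and $U\subseteq V$ write $f\restriction U=\mathcal{F}(U\subseteq V)(f)$. $\mathrm{Reg}(U)=\mathrm{Int}\,\mathrm{Cl}\,U$; $\mathrm{RO}(X)$ is the complete boolean algebra of regular open sets; $\mathrm{St}(\mathrm{RO}(X))$ is its Stone space of ultrafilters with clopen sets $N_q=\{G:q\in G\}$, $q\in\mathrm{RO}(X)$. For an ultrafilter $G$ on $\mathrm{RO}(X)$ let $\bar G=\{U\in\mathcal{O}(X):\mathrm{Reg}(U)\in G\}$. For $f\in\mathcal{F}(U_f)$, $g\in\mathcal{F}(U_g)$ with $U_f,U_g\in\bar G$, set $f\equiv_G g$ iff there is $U\in\bar G$ with $U\subseteq U_f\cap U_g$ such that $D_{f,g}=\{V\in\mathcal{O}(X):V\subseteq U_f\cap U_g,\ f\restriction V=g\restriction V\}$ is dense below $U$ (every non-empty open $W\subseteq U$ contains some element of $D_{f,g}$). Let $[f]_G$ be the class of $f$, $\mathcal{F}_G=\{[f]_G:f\in\mathcal{F}(U_f),U_f\in\bar G\}$ (the stalk over $G$), $\Lambda^1_{\mathcal{F}}=\coprod_{G\in\mathrm{St}(\mathrm{RO}(X))}\mathcal{F}_G$ and $p^1_{\mathcal{F}}([f]_G)=G$. For $f\in\mathcal{F}(U)$, $\dot f:N_{\mathrm{Reg}(U)}\to\Lambda^1_{\mathcal{F}}$ is $G\mapsto[f]_G$. $\tau^1_{\mathcal{F}}$ is the topology generated by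 $B^1_{\mathcal{F}}=\{\dot f[N_q]: q\in\mathrm{RO}(X),\ q\subseteq\mathrm{Reg}(U),\ f\in\mathcal{F}(U),\ U\in\mathcal{O}(X)\}$. A local section of a continuous $p:E\to Z$ over an open $V\subseteq Z$ is a continuous $s:V\to E$ with $p\circ s=\mathrm{id}_V$; $p$ is an étalé space if every $e\in E$ has an open neighbourhood $O$ with $p[O]$ open and $p\restriction O:O\to p[O]$ a homeomorphism. *)

theory Defs
  imports "HOL-Analysis.Analysis"
begin

definition Opens :: "'a topology \<Rightarrow> 'a set set" where
  "Opens X = {U. openin X U \<and> U \<noteq> {}}"

definition presheaf :: "'a topology \<Rightarrow> ('a set \<Rightarrow> 'b set) \<Rightarrow> ('a set \<Rightarrow> 'a set \<Rightarrow> 'b \<Rightarrow> 'b) \<Rightarrow> bool" where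
  "presheaf X Fs res \<longleftrightarrow>
     (\<forall>U\<in>Opens X. \<forall>f\<in>Fs U. res U U f = f) \<and>
     (\<forall>U\<in>Opens X. \<forall>V\<in>Opens X. V \<subseteq> U \<longrightarrow> (\<forall>f\<in>Fs U. res V U f \<in> Fs V)) \<and>
     (\<forall>U\<in>Opens X. \<forall>V\<in>Opens X. \<forall>W\<in>Opens X. W \<subseteq> V \<longrightarrow> V \<subseteq> U \<longrightarrow>
        (\<forall>f\<in>Fs U. res W V (res V U f) = res W U f))"

definition Reg :: "'a topology \<Rightarrow> 'a set \<Rightarrow> 'a set" where
  "Reg X U = X interior_of (X closure_of U)"

definition RO :: "'a topology \<Rightarrow> 'a set set" where
  "RO X = {U. openin X U \<and> Reg X U = U}"

text \<open>Ultrafilters on the boolean algebra RO(X) (meet = intersection,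
  complement = interior of set complement, top = topspace X, bottom = {}).\<close>
definition ultrafilter_RO :: "'a topology \<Rightarrow> 'a set set \<Rightarrow> bool" where
  "ultrafilter_RO X G \<longleftrightarrow>
     G \<subseteq> RO X \<and> topspace X \<in> G \<and> {} \<notin> G \<and>
     (\<forall>p q. p \<in> G \<longrightarrow> q \<in> RO X \<longrightarrow> p \<subseteq> q \<longrightarrow> q \<in> G) \<and>
     (\<forall>p q. p \<in> G \<longrightarrow> q \<in> G \<longrightarrow> p \<inter> q \<in> G) \<and>
     (\<forall>q\<in>RO X. q \<in> G \<or> X interior_of (topspace X - q) \<in> G)"

definition St :: "'a topology \<Rightarrow> 'a set set set" where
  "St X = {G. ultrafilter_RO X G}"

definition Nq :: "'a topology \<Rightarrow> 'a set \<Rightarrow> 'a set set set" where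
  "Nq X q = {G \<in> St X. q \<in> G}"

definition StoneTop :: "'a topology \<Rightarrow> 'a set set topology" where
  "StoneTop X = topology_generated_by {Nq X q | q. q \<in> RO X}"

definition Gbar :: "'a topology \<Rightarrow> 'a set set \<Rightarrow> 'a set set" where
  "Gbar X G = {U \<in> Opens X. Reg X U \<in> G}"

text \<open>Sections are represented together with their domain as pairs (U, f), f \<in> Fs U.\<close>
definition germ_eq :: "'a topology \<Rightarrow> ('a set \<Rightarrow> 'b set) \<Rightarrow> ('a set \<Rightarrow> 'a set \<Rightarrow> 'b \<Rightarrow> 'b)
     \<Rightarrow> 'a set set \<Rightarrow> 'a set \<times> 'b \<Rightarrow> 'a set \<times> 'b \<Rightarrow> bool" where
  "germ_eq X Fs res G uf vg \<longleftrightarrow>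
     (case uf of (Uf, f) \<Rightarrow> case vg of (Ug, g) \<Rightarrow>
       Uf \<in> Gbar X G \<and> f \<in> Fs Uf \<and> Ug \<in> Gbar X G \<and> g \<in> Fs Ug \<and>
       (\<exists>U\<in>Gbar X G. U \<subseteq> Uf \<inter> Ug \<and>
          (\<forall>W. openin X W \<and> W \<noteq> {} \<and> W \<subseteq> U \<longrightarrow>
             (\<exists>V. V \<in> Opens X \<and> V \<subseteq> Uf \<inter> Ug \<and> res V Uf f = res V Ug g \<and> V \<subseteq> W))))"

definition germ :: "'a topology \<Rightarrow> ('a set \<Rightarrow> 'b set) \<Rightarrow> ('a set \<Rightarrow> 'a set \<Rightarrow> 'b \<Rightarrow> 'b)
     \<Rightarrow> 'a set set \<Rightarrow> 'a set \<Rightarrow> 'b \<Rightarrow> ('a set \<times> 'b) set" where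
  "germ X Fs res G U f = {vg. germ_eq X Fs res G (U, f) vg}"

definition stalk :: "'a topology \<Rightarrow> ('a set \<Rightarrow> 'b set) \<Rightarrow> ('a set \<Rightarrow> 'a set \<Rightarrow> 'b \<Rightarrow> 'b)
     \<Rightarrow> 'a set set \<Rightarrow> ('a set \<times> 'b) set set" where
  "stalk X Fs res G = {germ X Fs res G U f | U f. U \<in> Gbar X G \<and> f \<in> Fs U}"

definition Lambda1 :: "'a topology \<Rightarrow> ('a set \<Rightarrow> 'b set) \<Rightarrow> ('a set \<Rightarrow> 'a set \<Rightarrow> 'b \<Rightarrow> 'b)
     \<Rightarrow> ('a set set \<times> ('a set \<times> 'b) set) set" where
  "Lambda1 X Fs res = {(G, c) | G c. G \<in> St X \<and> c \<in> stalk X Fs res G}"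

definition p1 :: "'a set set \<times> ('a set \<times> 'b) set \<Rightarrow> 'a set set" where
  "p1 = fst"

definition fdot :: "'a topology \<Rightarrow> ('a set \<Rightarrow> 'b set) \<Rightarrow> ('a set \<Rightarrow> 'a set \<Rightarrow> 'b \<Rightarrow> 'b)
     \<Rightarrow> 'a set \<Rightarrow> 'b \<Rightarrow> 'a set set \<Rightarrow> 'a set set \<times> ('a set \<times> 'b) set" where
  "fdot X Fs res U f = (\<lambda>G. (G, germ X Fs res G U f))"

definition B1 :: "'a topology \<Rightarrow> ('a set \<Rightarrow> 'b set) \<Rightarrow> ('a set \<Rightarrow> 'a set \<Rightarrow> 'b \<Rightarrow> 'b)
     \<Rightarrow> ('a set set \<times> ('a set \<times> 'b) set) set set" where
  "B1 X Fs res = {fdot X Fs res U f ` Nq X q | q U f.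
      q \<in> RO X \<and> q \<subseteq> Reg X U \<and> U \<in> Opens X \<and> f \<in> Fs U}"

definition tau1 :: "'a topology \<Rightarrow> ('a set \<Rightarrow> 'b set) \<Rightarrow> ('a set \<Rightarrow> 'a set \<Rightarrow> 'b \<Rightarrow> 'b)
     \<Rightarrow> ('a set set \<times> ('a set \<times> 'b) set) topology" where
  "tau1 X Fs res = topology_generated_by (B1 X Fs res)"

definition is_base :: "'c topology \<Rightarrow> 'c set set \<Rightarrow> bool" where
  "is_base T B \<longleftrightarrow> (\<forall>b\<in>B. openin T b) \<and>
     (\<forall>S. openin T S \<longrightarrow> (\<exists>C. C \<subseteq> B \<and> \<Union>C = S))"

definition zero_dimensional :: "'c topology \<Rightarrow> bool" where
  "zero_dimensional T \<longleftrightarrow> (\<exists>B. is_base T B \<and> (\<forall>b\<in>B. closedin T b))"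

definition local_section :: "'c topology \<Rightarrow> 'd topology \<Rightarrow> ('c \<Rightarrow> 'd) \<Rightarrow> 'd set \<Rightarrow> ('d \<Rightarrow> 'c) \<Rightarrow> bool" where
  "local_section E Z p V s \<longleftrightarrow> openin Z V \<and> continuous_map (subtopology Z V) E s \<and>
     (\<forall>z\<in>V. p (s z) = z)"

definition etale :: "'c topology \<Rightarrow> 'd topology \<Rightarrow> ('c \<Rightarrow> 'd) \<Rightarrow> bool" where
  "etale E Z p \<longleftrightarrow> continuous_map E Z p \<and>
     (\<forall>e\<in>topspace E. \<exists>W. openin E W \<and> e \<in> W \<and> openin Z (p ` W) \<and>
        homeomorphic_map (subtopology E W) (subtopology Z (p ` W)) p)"

end

theory Submission
  imports Defs
begin

abbreviation neg :: "'a topology \<Rightarrow> 'a set \<Rightarrow> 'a set" where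
  "neg X q \<equiv> X interior_of (topspace X - q)"

lemma Reg_open: "openin X (Reg X U)"
  by (simp add: Reg_def)

lemma Reg_sub: "openin X U \<Longrightarrow> U \<subseteq> Reg X U"
  unfolding Reg_def
  by (rule interior_of_maximal[OF closure_of_subset[OF openin_subset]])

lemma Reg_mono: "U \<subseteq> V \<Longrightarrow> Reg X U \<subseteq> Reg X V"
  unfolding Reg_def by (simp add: closure_of_mono interior_of_mono)

lemma Reg_topspace: "Reg X U \<subseteq> topspace X"
  unfolding Reg_def by (simp add: interior_of_subset_topspace)

lemma Reg_Reg: "Reg X (Reg X U) = Reg X U"
proof
  have "X closure_of (Reg X U) \<subseteq> X closure_of U"
    unfolding Reg_def
    by (metis closure_of_closure_of closure_of_mono interior_of_subset)
  then show "Reg X (Reg X U) \<subseteq> Reg X U"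
    unfolding Reg_def[of X "Reg X U"] unfolding Reg_def[of X U] by (simp add: interior_of_mono)
  show "Reg X U \<subseteq> Reg X (Reg X U)" by (rule Reg_sub[OF Reg_open])
qed

lemma Reg_RO: "Reg X U \<in> RO X"
  by (simp add: RO_def Reg_open Reg_Reg)

lemma Reg_empty: "Reg X {} = {}"
  by (simp add: Reg_def)

lemma RO_open: "q \<in> RO X \<Longrightarrow> openin X q"
  by (simp add: RO_def)

lemma RO_Int: "q \<in> RO X \<Longrightarrow> r \<in> RO X \<Longrightarrow> q \<inter> r \<in> RO X"
proof -
  assume a: "q \<in> RO X" "r \<in> RO X"
  then have o: "openin X (q \<inter> r)" by (simp add: RO_def openin_Int)
  have "Reg X (q \<inter> r) \<subseteq> Reg X q \<inter> Reg X r" by (simp add: Reg_mono)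
  also have "\<dots> = q \<inter> r" using a by (simp add: RO_def)
  finally show ?thesis using Reg_sub[OF o] o by (auto simp: RO_def)
qed

lemma topspace_RO: "topspace X \<in> RO X"
  by (simp add: RO_def Reg_def)

lemma open_Int_closure: "openin X A \<Longrightarrow> A \<inter> X closure_of V \<subseteq> X closure_of (A \<inter> V)"
proof
  fix x assume A: "openin X A" and x: "x \<in> A \<inter> X closure_of V"
  show "x \<in> X closure_of (A \<inter> V)"
    unfolding in_closure_of
  proof (intro conjI allI impI)
    show "x \<in> topspace X" using x by (meson IntD2 in_closure_of)
    fix T assume T: "x \<in> T \<and> openin X T"
    then have "x \<in> A \<inter> T \<and> openin X (A \<inter> T)" using A x by auto
    moreover have "\<forall>T. x \<in> T \<and> openin X T \<longrightarrow> (\<exists>y. y \<in> V \<and> y \<in> T)"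
      using x by (auto simp: in_closure_of)
    ultimately obtain y where "y \<in> V" "y \<in> A \<inter> T" by blast
    then show "\<exists>y. y \<in> A \<inter> V \<and> y \<in> T" by blast
  qed
qed

lemma Reg_Int: assumes "openin X U" "openin X V"
  shows "Reg X U \<inter> Reg X V \<subseteq> Reg X (U \<inter> V)"
proof -
  let ?W = "Reg X U \<inter> Reg X V"
  have oW: "openin X ?W" by (simp add: Reg_open openin_Int)
  have RU: "Reg X U \<subseteq> X closure_of U" "Reg X V \<subseteq> X closure_of V"
    unfolding Reg_def by (rule interior_of_subset)+
  have c1: "?W \<subseteq> X closure_of (?W \<inter> U)"
    using RU open_Int_closure[OF oW, of U] by blast
  have "?W \<inter> U \<subseteq> U \<inter> X closure_of V"
    using RU by blast
  also have "\<dots> \<subseteq> X closure_of (U \<inter> V)" by (rule open_Int_closure[OF assms(1)])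
  finally have c2: "?W \<inter> U \<subseteq> X closure_of (U \<inter> V)" .
  have "X closure_of (?W \<inter> U) \<subseteq> X closure_of (X closure_of (U \<inter> V))"
    using c2 by (rule closure_of_mono)
  then have "?W \<subseteq> X closure_of (U \<inter> V)" using c1 by simp
  then show ?thesis unfolding Reg_def[of X "U \<inter> V"] using oW by (rule interior_of_maximal)
qed

lemma neg_RO: assumes "openin X q" shows "neg X q \<in> RO X"
proof -
  let ?n = "neg X q"
  have on: "openin X ?n" by simp
  have "?n \<inter> q = {}" using interior_of_subset[of X "topspace X - q"] by blast
  then have e: "X closure_of ?n \<inter> q = {}"
  proof -
    have "q \<inter> X closure_of ?n \<subseteq> X closure_of (q \<inter> ?n)" by (rule open_Int_closure[OF assms])
    also have "q \<inter> ?n = {}" using \<open>?n \<inter> q = {}\<close> by blast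
    finally show ?thesis by auto
  qed
  have "X closure_of ?n \<subseteq> topspace X - q"
    using e closure_of_subset_topspace[of X ?n] by blast
  then have "X interior_of (X closure_of ?n) \<subseteq> ?n"
    by (rule interior_of_mono)
  then have "Reg X ?n \<subseteq> ?n" unfolding Reg_def .
  then show ?thesis using Reg_sub[OF on] on by (auto simp: RO_def)
qed

lemma neg_disj: "q \<inter> neg X q = {}"
  using interior_of_subset[of X "topspace X - q"] by blast

section \<open>Ultrafilters\<close>

lemma St_D:
  assumes "G \<in> St X"
  shows "G \<subseteq> RO X" "topspace X \<in> G" "{} \<notin> G"
    "\<And>p q. p \<in> G \<Longrightarrow> q \<in> RO X \<Longrightarrow> p \<subseteq> q \<Longrightarrow> q \<in> G"
    "\<And>p q. p \<in> G \<Longrightarrow> q \<in> G \<Longrightarrow> p \<inter> q \<in> G"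
    "\<And>q. q \<in> RO X \<Longrightarrow> q \<notin> G \<Longrightarrow> neg X q \<in> G"
  using assms by (auto simp: St_def ultrafilter_RO_def)

lemma St_not_both: "G \<in> St X \<Longrightarrow> q \<in> G \<Longrightarrow> neg X q \<in> G \<Longrightarrow> False"
  using St_D(3,5) neg_disj by metis

lemma St_diff: assumes "G \<in> St X" "H \<in> St X" "G \<noteq> H" shows "\<exists>q\<in>H. q \<notin> G"
proof (rule ccontr)
  assume "\<not> ?thesis"
  then have HG: "H \<subseteq> G" by blast
  have "G \<subseteq> H"
  proof
    fix q assume q: "q \<in> G"
    show "q \<in> H"
    proof (rule ccontr)
      assume "q \<notin> H"
      moreover have "q \<in> RO X" using St_D(1)[OF assms(1)] q by blast
      ultimately have "neg X q \<in> H" using St_D(6)[OF assms(2)] by blast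
      then have "neg X q \<in> G" using HG by blast
      then show False using St_not_both[OF assms(1) q] by blast
    qed
  qed
  then show False using HG assms(3) by blast
qed

lemma St_meet_open: assumes "G \<in> St X" "Reg X U \<in> G" "q \<in> G"
  shows "U \<inter> q \<noteq> {}"
proof -
  have "Reg X U \<inter> q \<in> G" using St_D(5) assms by blast
  then have "Reg X U \<inter> q \<noteq> {}" using St_D(3)[OF assms(1)] by metis
  then obtain x where x: "x \<in> Reg X U" "x \<in> q" by blast
  have "x \<in> X closure_of U" using x(1) interior_of_subset[of X "X closure_of U"] unfolding Reg_def by blast
  then have "\<forall>T. x \<in> T \<and> openin X T \<longrightarrow> (\<exists>y. y \<in> U \<and> y \<in> T)" by (simp add: in_closure_of)
  moreover have "openin X q" using St_D(1)[OF assms(1)] assms(3) RO_open by blast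
  ultimately show ?thesis using x(2) by blast
qed

lemma St_finite_Inter: assumes "G \<in> St X" "finite T" "T \<subseteq> G"
  shows "topspace X \<inter> \<Inter>T \<in> G"
  using assms(2,3)
proof (induction T rule: finite_induct)
  case empty
  then show ?case using St_D(2)[OF assms(1)] by simp
next
  case (insert t T)
  have "topspace X \<inter> \<Inter>(insert t T) = t \<inter> (topspace X \<inter> \<Inter>T)" by blast
  moreover have "t \<in> G" "topspace X \<inter> \<Inter>T \<in> G" using insert by auto
  ultimately show ?case using St_D(5)[OF assms(1)] by metis
qed

definition int_prop :: "'c set set \<Rightarrow> bool" where
  "int_prop B \<longleftrightarrow> (\<forall>b1\<in>B. \<forall>b2\<in>B. \<forall>x\<in>b1 \<inter> b2. \<exists>b\<in>B. x \<in> b \<and> b \<subseteq> b1 \<inter> b2)"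

lemma gen_local:
  assumes "int_prop B" "generate_topology_on B S"
  shows "\<forall>x\<in>S. \<exists>b\<in>B. x \<in> b \<and> b \<subseteq> S"
  using assms(2)
proof (induction rule: generate_topology_on.induct)
  case Empty
  then show ?case by simp
next
  case (Int a b)
  show ?case
  proof
    fix x assume x: "x \<in> a \<inter> b"
    obtain b1 where b1: "b1 \<in> B" "x \<in> b1" "b1 \<subseteq> a" using Int x by blast
    obtain b2 where b2: "b2 \<in> B" "x \<in> b2" "b2 \<subseteq> b" using Int x by blast
    obtain b3 where "b3 \<in> B" "x \<in> b3" "b3 \<subseteq> b1 \<inter> b2"
      using assms(1) b1 b2 unfolding int_prop_def by blast
    then show "\<exists>c\<in>B. x \<in> c \<and> c \<subseteq> a \<inter> b" using b1 b2 by blast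
  qed
next
  case (UN K)
  show ?case
  proof
    fix x assume "x \<in> \<Union>K"
    then obtain k where k: "k \<in> K" "x \<in> k" by blast
    then obtain b where "b \<in> B" "x \<in> b" "b \<subseteq> k" using UN by blast
    then show "\<exists>b\<in>B. x \<in> b \<and> b \<subseteq> \<Union>K" using k by blast
  qed
next
  case (Basis s)
  then show ?case by blast
qed

lemma openin_gen_iff:
  assumes "int_prop B"
  shows "openin (topology_generated_by B) S \<longleftrightarrow> (\<forall>x\<in>S. \<exists>b\<in>B. x \<in> b \<and> b \<subseteq> S)"
proof
  assume "openin (topology_generated_by B) S"
  then show "\<forall>x\<in>S. \<exists>b\<in>B. x \<in> b \<and> b \<subseteq> S"
    using gen_local[OF assms] openin_topology_generated_by_iff by blast
next
  assume a: "\<forall>x\<in>S. \<exists>b\<in>B. x \<in> b \<and> b \<subseteq> S"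
  have "S = \<Union>{b\<in>B. b \<subseteq> S}" using a by blast
  moreover have "generate_topology_on B (\<Union>{b\<in>B. b \<subseteq> S})"
    by (rule generate_topology_on.UN) (auto intro: generate_topology_on.Basis)
  ultimately show "openin (topology_generated_by B) S"
    using openin_topology_generated_by_iff by metis
qed

lemma is_base_gen:
  assumes "int_prop B" shows "is_base (topology_generated_by B) B"
  unfolding is_base_def
proof (intro conjI ballI allI impI)
  fix b assume "b \<in> B" then show "openin (topology_generated_by B) b"
    by (rule topology_generated_by_Basis)
next
  fix S assume "openin (topology_generated_by B) S"
  then have "\<forall>x\<in>S. \<exists>b\<in>B. x \<in> b \<and> b \<subseteq> S" using openin_gen_iff[OF assms] by blast
  then have "{b\<in>B. b \<subseteq> S} \<subseteq> B \<and> \<Union>{b\<in>B. b \<subseteq> S} = S" by blast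
  then show "\<exists>C. C \<subseteq> B \<and> \<Union>C = S" by blast
qed

section \<open>The Stone space\<close>

lemma Nq_Int: "Nq X q \<inter> Nq X r = Nq X (q \<inter> r)" if "q \<in> RO X" "r \<in> RO X"
proof
  show "Nq X q \<inter> Nq X r \<subseteq> Nq X (q \<inter> r)" unfolding Nq_def using St_D(5) by blast
  show "Nq X (q \<inter> r) \<subseteq> Nq X q \<inter> Nq X r"
  proof
    fix G assume G: "G \<in> Nq X (q \<inter> r)"
    then have "G \<in> St X" "q \<inter> r \<in> G" by (auto simp: Nq_def)
    then have "q \<in> G" "r \<in> G" using St_D(4) that by (metis Int_lower1, metis Int_lower2)
    then show "G \<in> Nq X q \<inter> Nq X r" using \<open>G \<in> St X\<close> by (auto simp: Nq_def)
  qed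
qed

lemma int_prop_Stone: "int_prop {Nq X q | q. q \<in> RO X}"
  unfolding int_prop_def
proof (intro ballI)
  fix b1 b2 x assume b1: "b1 \<in> {Nq X q | q. q \<in> RO X}" and b2: "b2 \<in> {Nq X q | q. q \<in> RO X}"
    and x: "x \<in> b1 \<inter> b2"
  obtain q r where "b1 = Nq X q" "b2 = Nq X r" "q \<in> RO X" "r \<in> RO X" using b1 b2 by blast
  then have "b1 \<inter> b2 = Nq X (q \<inter> r)" "q \<inter> r \<in> RO X" using Nq_Int RO_Int by auto
  then show "\<exists>b\<in>{Nq X q | q. q \<in> RO X}. x \<in> b \<and> b \<subseteq> b1 \<inter> b2" using x by blast
qed

lemma openin_Stone_iff:
  "openin (StoneTop X) S \<longleftrightarrow> (\<forall>G\<in>S. \<exists>q\<in>RO X. G \<in> Nq X q \<and> Nq X q \<subseteq> S)"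
proof -
  have "openin (StoneTop X) S \<longleftrightarrow> (\<forall>x\<in>S. \<exists>b\<in>{Nq X q | q. q \<in> RO X}. x \<in> b \<and> b \<subseteq> S)"
    unfolding StoneTop_def by (rule openin_gen_iff[OF int_prop_Stone])
  also have "\<dots> \<longleftrightarrow> (\<forall>G\<in>S. \<exists>q\<in>RO X. G \<in> Nq X q \<and> Nq X q \<subseteq> S)"
    by (intro ball_cong refl) blast
  finally show ?thesis .
qed

lemma Nq_open: "q \<in> RO X \<Longrightarrow> openin (StoneTop X) (Nq X q)"
  unfolding StoneTop_def by (rule topology_generated_by_Basis) blast

lemma Nq_sub: "Nq X q \<subseteq> St X" by (auto simp: Nq_def)

lemma topspace_Stone: "topspace (StoneTop X) = St X"
proof
  show "topspace (StoneTop X) \<subseteq> St X" unfolding StoneTop_def by (auto simp: Nq_def)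
  have "Nq X (topspace X) = St X" using St_D(2) by (auto simp: Nq_def)
  then show "St X \<subseteq> topspace (StoneTop X)" unfolding StoneTop_def using topspace_RO by auto
qed

definition fip :: "'a topology \<Rightarrow> 'a set set \<Rightarrow> bool" where
  "fip X S \<longleftrightarrow> S \<subseteq> RO X \<and> (\<forall>T. finite T \<and> T \<subseteq> S \<longrightarrow> topspace X \<inter> \<Inter>T \<noteq> {})"

lemma fip_insert:
  assumes "fip X M" "a \<in> RO X" "\<forall>T. finite T \<and> T \<subseteq> M \<longrightarrow> topspace X \<inter> \<Inter>T \<inter> a \<noteq> {}"
  shows "fip X (insert a M)"
  unfolding fip_def
proof (intro conjI allI impI)
  show "insert a M \<subseteq> RO X" using assms(1,2) by (auto simp: fip_def)
  fix T assume T: "finite T \<and> T \<subseteq> insert a M"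
  then have "finite (T - {a}) \<and> T - {a} \<subseteq> M" by blast
  then have "topspace X \<inter> \<Inter>(T - {a}) \<inter> a \<noteq> {}" using assms(3) by simp
  moreover have "topspace X \<inter> \<Inter>(T - {a}) \<inter> a \<subseteq> topspace X \<inter> \<Inter>T" by blast
  ultimately show "topspace X \<inter> \<Inter>T \<noteq> {}" by blast
qed

lemma open_fin_Inter:
  assumes "finite T" "\<forall>t\<in>T. openin X t" shows "openin X (topspace X \<inter> \<Inter>T)"
  using assms
proof (induction T rule: finite_induct)
  case empty
  show ?case by (subst Inter_empty, subst Int_UNIV_right, rule openin_topspace)
next
  case (insert t T)
  have e: "topspace X \<inter> \<Inter>(insert t T) = t \<inter> (topspace X \<inter> \<Inter>T)" by blast
  have "\<forall>t\<in>T. openin X t" using insert.prems by simp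
  then have o1: "openin X (topspace X \<inter> \<Inter>T)" by (rule insert.IH)
  have o2: "openin X t" using insert.prems by simp
  show ?case unfolding e using o2 o1 by (rule openin_Int)
qed

lemma fip_ultra:
  assumes "fip X S" shows "\<exists>G\<in>St X. S \<subseteq> G"
proof -
  let ?A = "{M. S \<subseteq> M \<and> fip X M}"
  have "\<forall>C\<in>chains ?A. \<exists>U\<in>?A. \<forall>X\<in>C. X \<subseteq> U"
  proof
    fix C assume C: "C \<in> chains ?A"
    show "\<exists>U\<in>?A. \<forall>X\<in>C. X \<subseteq> U"
    proof (cases "C = {}")
      case True
      then show ?thesis using assms by blast
    next
      case False
      have ch: "subset.chain ?A C" using C by (simp add: chains_alt_def)
      have CA: "C \<subseteq> ?A" using C by (simp add: chains_def)
      have "fip X (\<Union>C)"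
        unfolding fip_def
      proof (intro conjI allI impI)
        show "\<Union>C \<subseteq> RO X" using CA by (auto simp: fip_def)
        fix T assume T: "finite T \<and> T \<subseteq> \<Union>C"
        show "topspace X \<inter> \<Inter>T \<noteq> {}"
        proof (cases "T = {}")
          case True
          obtain M where "M \<in> C" using False by blast
          then have "fip X M" using CA by blast
          then show ?thesis using True unfolding fip_def by (metis empty_subsetI finite.emptyI)
        next
          case Tne: False
          obtain M where "M \<in> C" "T \<subseteq> M"
            using finite_subset_Union_chain[of T C ?A] T Tne False ch by blast
          then show ?thesis using CA T unfolding fip_def by blast
        qed
      qed
      moreover have "S \<subseteq> \<Union>C" using CA False by blast
      ultimately show ?thesis by blast
    qed
  qed
  then obtain M where M: "M \<in> ?A" and max: "\<forall>N\<in>?A. M \<subseteq> N \<longrightarrow> N = M"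
    using Zorn_Lemma2[of ?A] by blast
  have fM: "fip X M" using M by simp
  have SM: "S \<subseteq> M" using M by simp
  have addin: "a \<in> M" if "a \<in> RO X" "\<forall>T. finite T \<and> T \<subseteq> M \<longrightarrow> topspace X \<inter> \<Inter>T \<inter> a \<noteq> {}" for a
  proof -
    have "insert a M \<in> ?A" using fip_insert[OF fM that] SM by (simp add: subset_insertI2)
    then have "insert a M = M" using max[rule_format, OF _ subset_insertI] by blast
    then show ?thesis by blast
  qed
  have MRO: "M \<subseteq> RO X" using fM by (simp add: fip_def)
  have fin: "topspace X \<inter> \<Inter>T \<noteq> {}" if "finite T" "T \<subseteq> M" for T
    using fM that by (simp add: fip_def)
  have "ultrafilter_RO X M"
    unfolding ultrafilter_RO_def
  proof (intro conjI allI impI ballI)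
    show "M \<subseteq> RO X" by (rule MRO)
    show "topspace X \<in> M"
    proof (rule addin[OF topspace_RO], intro allI impI)
      fix T assume "finite T \<and> T \<subseteq> M"
      then have "topspace X \<inter> \<Inter>T \<noteq> {}" using fin by blast
      then show "topspace X \<inter> \<Inter>T \<inter> topspace X \<noteq> {}" by blast
    qed
    show "{} \<notin> M"
    proof
      assume "{} \<in> M"
      then have "topspace X \<inter> \<Inter>{{}} \<noteq> {}" using fin[of "{{}}"] by blast
      then show False by blast
    qed
    fix p q
    show "p \<in> M \<Longrightarrow> q \<in> RO X \<Longrightarrow> p \<subseteq> q \<Longrightarrow> q \<in> M"
    proof -
      assume pq: "p \<in> M" "q \<in> RO X" "p \<subseteq> q"
      show "q \<in> M"
      proof (rule addin[OF pq(2)], intro allI impI)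
        fix T assume T: "finite T \<and> T \<subseteq> M"
        have f1: "finite (insert p T)" using T by simp
        have f2: "insert p T \<subseteq> M" using T pq(1) by simp
        have "topspace X \<inter> \<Inter>(insert p T) \<noteq> {}" by (rule fin[OF f1 f2])
        moreover have "topspace X \<inter> \<Inter>(insert p T) \<subseteq> topspace X \<inter> \<Inter>T \<inter> q" using pq(3) by blast
        ultimately show "topspace X \<inter> \<Inter>T \<inter> q \<noteq> {}" by blast
      qed
    qed
    show "p \<in> M \<Longrightarrow> q \<in> M \<Longrightarrow> p \<inter> q \<in> M"
    proof -
      assume pq: "p \<in> M" "q \<in> M"
      have "p \<inter> q \<in> RO X" using MRO pq RO_Int by blast
      then show "p \<inter> q \<in> M"
      proof (rule addin, intro allI impI)
        fix T assume T: "finite T \<and> T \<subseteq> M"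
        have f1: "finite (insert p (insert q T))" using T by simp
        have f2: "insert p (insert q T) \<subseteq> M" using T pq by simp
        have "topspace X \<inter> \<Inter>(insert p (insert q T)) \<noteq> {}" by (rule fin[OF f1 f2])
        moreover have "topspace X \<inter> \<Inter>(insert p (insert q T)) \<subseteq> topspace X \<inter> \<Inter>T \<inter> (p \<inter> q)" by blast
        ultimately show "topspace X \<inter> \<Inter>T \<inter> (p \<inter> q) \<noteq> {}" by blast
      qed
    qed
  next
    fix q assume q: "q \<in> RO X"
    show "q \<in> M \<or> neg X q \<in> M"
    proof (rule ccontr)
      assume nn: "\<not> (q \<in> M \<or> neg X q \<in> M)"
      have oq: "openin X q" using q RO_open by blast
      have nRO: "neg X q \<in> RO X" using neg_RO[OF oq] .
      obtain T1 where T1: "finite T1" "T1 \<subseteq> M" "topspace X \<inter> \<Inter>T1 \<inter> q = {}"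
        using addin[OF q] nn by blast
      obtain T2 where T2: "finite T2" "T2 \<subseteq> M" "topspace X \<inter> \<Inter>T2 \<inter> neg X q = {}"
        using addin[OF nRO] nn by blast
      let ?A = "topspace X \<inter> \<Inter>(T1 \<union> T2)"
      have ne: "?A \<noteq> {}" using fin[of "T1 \<union> T2"] T1 T2 by blast
      have "\<forall>t\<in>T1 \<union> T2. openin X t" using T1 T2 MRO RO_open by blast
      then have oA: "openin X ?A" using open_fin_Inter[of "T1 \<union> T2" X] T1 T2 by blast
      have "?A \<subseteq> topspace X - q" using T1(3) by blast
      then have "?A \<subseteq> neg X q" using oA by (rule interior_of_maximal)
      then have "?A \<subseteq> topspace X \<inter> \<Inter>T2 \<inter> neg X q" by blast
      then show False using ne T2(3) by blast
    qed
  qed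
  then show ?thesis using SM by (auto simp: St_def)
qed

lemma compact_Nq:
  assumes q0: "q0 \<in> RO X" shows "compactin (StoneTop X) (Nq X q0)"
  unfolding compactin_def
proof (intro conjI allI impI)
  show "Nq X q0 \<subseteq> topspace (StoneTop X)" using Nq_sub topspace_Stone by blast
  fix \<U> assume U: "(\<forall>x\<in>\<U>. openin (StoneTop X) x) \<and> Nq X q0 \<subseteq> \<Union>\<U>"
  define R where "R = {r\<in>RO X. \<exists>u\<in>\<U>. Nq X r \<subseteq> u}"
  have cov: "\<exists>r\<in>R. G \<in> Nq X r" if G0: "G \<in> Nq X q0" for G
  proof -
    obtain u where u: "u \<in> \<U>" "G \<in> u" using U G0 by blast
    then obtain r where "r \<in> RO X" "G \<in> Nq X r" "Nq X r \<subseteq> u"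
      using U openin_Stone_iff by metis
    then show ?thesis using u unfolding R_def by blast
  qed
  have "\<exists>R'. finite R' \<and> R' \<subseteq> R \<and> Nq X q0 \<subseteq> \<Union>(Nq X ` R')"
  proof (rule ccontr)
    assume nf: "\<not> ?thesis"
    let ?S = "insert q0 ((\<lambda>r. neg X r) ` R)"
    have "fip X ?S"
      unfolding fip_def
    proof (intro conjI allI impI)
      show "?S \<subseteq> RO X" using q0 neg_RO RO_open unfolding R_def by blast
      fix T assume T: "finite T \<and> T \<subseteq> ?S"
      then have "T - {q0} \<subseteq> (\<lambda>r. neg X r) ` R" "finite (T - {q0})" by auto
      then obtain R' where R': "R' \<subseteq> R" "finite R'" "T - {q0} = (\<lambda>r. neg X r) ` R'"
        by (meson finite_subset_image)
      have "\<not> Nq X q0 \<subseteq> \<Union>(Nq X ` R')" using nf R'(1,2) by blast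
      then obtain G where G: "G \<in> Nq X q0" "G \<notin> \<Union>(Nq X ` R')" by blast
      have GS: "G \<in> St X" "q0 \<in> G" using G(1) by (auto simp: Nq_def)
      have negs: "neg X r \<in> G" if r: "r \<in> R'" for r
      proof -
        have "r \<in> RO X" using R'(1) r unfolding R_def by blast
        moreover have "r \<notin> G" using G(2) GS(1) r unfolding Nq_def by blast
        ultimately show "neg X r \<in> G" by (rule St_D(6)[OF GS(1)])
      qed
      have "T - {q0} \<subseteq> G" unfolding R'(3) using negs by blast
      then have sub: "insert q0 (T - {q0}) \<subseteq> G" using GS(2) by blast
      have fin: "finite (insert q0 (T - {q0}))" using T by blast
      define I where "I = topspace X \<inter> \<Inter>(insert q0 (T - {q0}))"
      have "I \<in> G" unfolding I_def by (rule St_finite_Inter[OF GS(1) fin sub])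
      moreover have "{} \<notin> G" by (rule St_D(3)[OF GS(1)])
      ultimately have "I \<noteq> {}" by blast
      moreover have "I \<subseteq> topspace X \<inter> \<Inter>T" unfolding I_def by blast
      ultimately show "topspace X \<inter> \<Inter>T \<noteq> {}" by blast
    qed
    then obtain G where G: "G \<in> St X" "?S \<subseteq> G" using fip_ultra by blast
    then have "G \<in> Nq X q0" by (auto simp: Nq_def)
    then obtain r where r: "r \<in> R" "G \<in> Nq X r" using cov by blast
    then have "r \<in> G" "neg X r \<in> G" using G by (auto simp: Nq_def)
    then show False using St_not_both[OF G(1)] by blast
  qed
  then obtain R' where R': "finite R'" "R' \<subseteq> R" "Nq X q0 \<subseteq> \<Union>(Nq X ` R')" by blast
  have "\<forall>r\<in>R'. \<exists>u. u \<in> \<U> \<and> Nq X r \<subseteq> u" using R' unfolding R_def by blast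
  then obtain ch where ch: "\<forall>r\<in>R'. ch r \<in> \<U> \<and> Nq X r \<subseteq> ch r" by metis
  show "\<exists>\<F>. finite \<F> \<and> \<F> \<subseteq> \<U> \<and> Nq X q0 \<subseteq> \<Union>\<F>"
  proof (intro exI conjI)
    show "finite (ch ` R')" using R' by blast
    show "ch ` R' \<subseteq> \<U>" using ch by blast
    show "Nq X q0 \<subseteq> \<Union>(ch ` R')" using R'(3) ch by blast
  qed
qed

definition dag :: "'a topology \<Rightarrow> ('a set \<Rightarrow> 'a set \<Rightarrow> 'b \<Rightarrow> 'b) \<Rightarrow> 'a set \<Rightarrow> 'a set \<Rightarrow> 'b \<Rightarrow> 'a set \<Rightarrow> 'b \<Rightarrow> bool" where
  "dag X res A U f V g \<longleftrightarrow> (\<forall>W. openin X W \<and> W \<noteq> {} \<and> W \<subseteq> A \<longrightarrow>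
      (\<exists>V'. V' \<in> Opens X \<and> V' \<subseteq> U \<inter> V \<and> res V' U f = res V' V g \<and> V' \<subseteq> W))"

lemma germ_eq_iff:
  "germ_eq X Fs res G (U, f) (V, g) \<longleftrightarrow> U \<in> Gbar X G \<and> f \<in> Fs U \<and> V \<in> Gbar X G \<and> g \<in> Fs V \<and>
     (\<exists>A\<in>Gbar X G. A \<subseteq> U \<inter> V \<and> dag X res A U f V g)"
  unfolding germ_eq_def dag_def by simp

lemma Opens_D: "U \<in> Opens X \<Longrightarrow> openin X U" "U \<in> Opens X \<Longrightarrow> U \<noteq> {}"
  by (auto simp: Opens_def)

lemma Opens_I: "openin X U \<Longrightarrow> U \<noteq> {} \<Longrightarrow> U \<in> Opens X"
  by (auto simp: Opens_def)

lemma Gbar_D: "U \<in> Gbar X G \<Longrightarrow> U \<in> Opens X" "U \<in> Gbar X G \<Longrightarrow> Reg X U \<in> G"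
  by (auto simp: Gbar_def)

lemma Gbar_I: "U \<in> Opens X \<Longrightarrow> Reg X U \<in> G \<Longrightarrow> U \<in> Gbar X G"
  by (auto simp: Gbar_def)

lemma Gbar_mono: assumes "G \<in> St X" "A \<in> Gbar X G" "U \<in> Opens X" "A \<subseteq> U"
  shows "U \<in> Gbar X G"
proof -
  have "Reg X A \<subseteq> Reg X U" using assms(4) by (rule Reg_mono)
  then have "Reg X U \<in> G" by (rule St_D(4)[OF assms(1) Gbar_D(2)[OF assms(2)] Reg_RO])
  with assms(3) show ?thesis by (rule Gbar_I)
qed

lemma Gbar_Int: assumes "G \<in> St X" "A \<in> Gbar X G" "B \<in> Gbar X G"
  shows "A \<inter> B \<in> Gbar X G"
proof -
  have oA: "openin X A" by (rule Opens_D(1)[OF Gbar_D(1)[OF assms(2)]])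
  have oB: "openin X B" by (rule Opens_D(1)[OF Gbar_D(1)[OF assms(3)]])
  have "Reg X A \<inter> Reg X B \<in> G" using St_D(5)[OF assms(1) Gbar_D(2)[OF assms(2)] Gbar_D(2)[OF assms(3)]] .
  moreover have "Reg X A \<inter> Reg X B \<subseteq> Reg X (A \<inter> B)" by (rule Reg_Int[OF oA oB])
  ultimately have R: "Reg X (A \<inter> B) \<in> G" by (rule St_D(4)[OF assms(1) _ Reg_RO])
  have "A \<inter> B \<noteq> {}"
  proof
    assume "A \<inter> B = {}"
    then have "Reg X (A \<inter> B) = {}" using Reg_empty by metis
    then have "{} \<in> G" using R by metis
    then show False using St_D(3)[OF assms(1)] by metis
  qed
  moreover have "openin X (A \<inter> B)" using oA oB by (rule openin_Int)
  ultimately have "A \<inter> B \<in> Opens X" by (intro Opens_I)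
  then show ?thesis using R by (rule Gbar_I)
qed

locale psh =
  fixes X :: "'a topology" and Fs :: "'a set \<Rightarrow> 'b set" and res :: "'a set \<Rightarrow> 'a set \<Rightarrow> 'b \<Rightarrow> 'b"
  assumes ps: "presheaf X Fs res"
begin

lemma res_id: "U \<in> Opens X \<Longrightarrow> f \<in> Fs U \<Longrightarrow> res U U f = f"
  using ps unfolding presheaf_def by (elim conjE) (rule bspec, rule bspec)

lemma res_in: "U \<in> Opens X \<Longrightarrow> V \<in> Opens X \<Longrightarrow> V \<subseteq> U \<Longrightarrow> f \<in> Fs U \<Longrightarrow> res V U f \<in> Fs V"
proof -
  assume a: "U \<in> Opens X" "V \<in> Opens X" "V \<subseteq> U" "f \<in> Fs U"
  have "\<forall>U\<in>Opens X. \<forall>V\<in>Opens X. V \<subseteq> U \<longrightarrow> (\<forall>f\<in>Fs U. res V U f \<in> Fs V)"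
    using ps unfolding presheaf_def by (elim conjE)
  then show ?thesis using a by blast
qed

lemma res_comp: "U \<in> Opens X \<Longrightarrow> V \<in> Opens X \<Longrightarrow> W \<in> Opens X \<Longrightarrow> W \<subseteq> V \<Longrightarrow> V \<subseteq> U \<Longrightarrow> f \<in> Fs U
   \<Longrightarrow> res W V (res V U f) = res W U f"
proof -
  assume a: "U \<in> Opens X" "V \<in> Opens X" "W \<in> Opens X" "W \<subseteq> V" "V \<subseteq> U" "f \<in> Fs U"
  have "\<forall>U\<in>Opens X. \<forall>V\<in>Opens X. \<forall>W\<in>Opens X. W \<subseteq> V \<longrightarrow> V \<subseteq> U \<longrightarrow>
        (\<forall>f\<in>Fs U. res W V (res V U f) = res W U f)"
    using ps unfolding presheaf_def by (elim conjE)
  then show ?thesis using a by blast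
qed

lemma propag:
  assumes "U1 \<in> Opens X" "U2 \<in> Opens X" "f1 \<in> Fs U1" "f2 \<in> Fs U2"
    "V1 \<in> Opens X" "V1 \<subseteq> U1 \<inter> U2" "res V1 U1 f1 = res V1 U2 f2" "V2 \<in> Opens X" "V2 \<subseteq> V1"
  shows "res V2 U1 f1 = res V2 U2 f2"
proof -
  have s1: "V1 \<subseteq> U1" "V1 \<subseteq> U2" using assms(6) by auto
  have "res V2 U1 f1 = res V2 V1 (res V1 U1 f1)"
    using res_comp[OF assms(1) assms(5) assms(8) assms(9) s1(1) assms(3)] by simp
  also have "\<dots> = res V2 V1 (res V1 U2 f2)" using assms(7) by simp
  also have "\<dots> = res V2 U2 f2"
    using res_comp[OF assms(2) assms(5) assms(8) assms(9) s1(2) assms(4)] by simp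
  finally show ?thesis .
qed

lemma ge_refl: assumes "U \<in> Gbar X G" "f \<in> Fs U" shows "germ_eq X Fs res G (U, f) (U, f)"
proof -
  have "dag X res U U f U f" unfolding dag_def
  proof (intro allI impI)
    fix W assume W: "openin X W \<and> W \<noteq> {} \<and> W \<subseteq> U"
    then have "W \<in> Opens X" by (auto simp: Opens_def)
    then show "\<exists>V'. V' \<in> Opens X \<and> V' \<subseteq> U \<inter> U \<and> res V' U f = res V' U f \<and> V' \<subseteq> W"
      using W by blast
  qed
  then show ?thesis unfolding germ_eq_iff using assms by blast
qed

lemma dag_sym: "dag X res A U f V g \<Longrightarrow> dag X res A V g U f"
  unfolding dag_def by (metis Int_commute)

lemma ge_sym: "germ_eq X Fs res G a b \<Longrightarrow> germ_eq X Fs res G b a"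
proof -
  assume a: "germ_eq X Fs res G a b"
  obtain U f where u: "a = (U, f)" by (cases a)
  obtain V g where v: "b = (V, g)" by (cases b)
  have "germ_eq X Fs res G (U, f) (V, g)" using a u v by simp
  then have "germ_eq X Fs res G (V, g) (U, f)" unfolding germ_eq_iff
    using dag_sym by (metis Int_commute)
  then show ?thesis using u v by simp
qed

lemma ge_trans0:
  assumes G: "G \<in> St X" and ab: "germ_eq X Fs res G (U1, f1) (U2, f2)"
    and bc: "germ_eq X Fs res G (U2, f2) (U3, f3)"
  shows "germ_eq X Fs res G (U1, f1) (U3, f3)"
proof -
  have U1: "U1 \<in> Gbar X G" "f1 \<in> Fs U1" and U2: "U2 \<in> Gbar X G" "f2 \<in> Fs U2"
    and U3: "U3 \<in> Gbar X G" "f3 \<in> Fs U3" using ab bc unfolding germ_eq_iff by blast+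
  obtain A where A: "A \<in> Gbar X G" "A \<subseteq> U1 \<inter> U2" "dag X res A U1 f1 U2 f2"
    using ab unfolding germ_eq_iff by blast
  obtain B where B: "B \<in> Gbar X G" "B \<subseteq> U2 \<inter> U3" "dag X res B U2 f2 U3 f3"
    using bc unfolding germ_eq_iff by blast
  have AB: "A \<inter> B \<in> Gbar X G" by (rule Gbar_Int[OF G A(1) B(1)])
  have "dag X res (A \<inter> B) U1 f1 U3 f3" unfolding dag_def
  proof (intro allI impI)
    fix W assume W: "openin X W \<and> W \<noteq> {} \<and> W \<subseteq> A \<inter> B"
    then have "openin X W \<and> W \<noteq> {} \<and> W \<subseteq> A" by blast
    from A(3)[unfolded dag_def, rule_format, OF this]
    obtain V1 where V1: "V1 \<in> Opens X" "V1 \<subseteq> U1 \<inter> U2" "res V1 U1 f1 = res V1 U2 f2" "V1 \<subseteq> W"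
      by blast
    have "openin X V1 \<and> V1 \<noteq> {} \<and> V1 \<subseteq> B" using V1 W Opens_D by blast
    from B(3)[unfolded dag_def, rule_format, OF this]
    obtain V2 where V2: "V2 \<in> Opens X" "V2 \<subseteq> U2 \<inter> U3" "res V2 U2 f2 = res V2 U3 f3" "V2 \<subseteq> V1"
      by blast
    have "res V2 U1 f1 = res V2 U2 f2"
      by (rule propag[OF Gbar_D(1)[OF U1(1)] Gbar_D(1)[OF U2(1)] U1(2) U2(2) V1(1-3) V2(1,4)])
    then have "res V2 U1 f1 = res V2 U3 f3" using V2(3) by simp
    moreover have "V2 \<subseteq> U1 \<inter> U3" "V2 \<subseteq> W" using V1 V2 by blast+
    ultimately show "\<exists>V'. V' \<in> Opens X \<and> V' \<subseteq> U1 \<inter> U3 \<and> res V' U1 f1 = res V' U3 f3 \<and> V' \<subseteq> W"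
      using V2(1) by blast
  qed
  moreover have "A \<inter> B \<subseteq> U1 \<inter> U3" using A B by blast
  ultimately show ?thesis unfolding germ_eq_iff using U1 U3 AB by blast
qed

lemma ge_trans: "G \<in> St X \<Longrightarrow> germ_eq X Fs res G a b \<Longrightarrow> germ_eq X Fs res G b c \<Longrightarrow> germ_eq X Fs res G a c"
proof -
  assume G: "G \<in> St X" and ab: "germ_eq X Fs res G a b" and bc: "germ_eq X Fs res G b c"
  obtain U1 f1 where 1: "a = (U1, f1)" by (cases a)
  obtain U2 f2 where 2: "b = (U2, f2)" by (cases b)
  obtain U3 f3 where 3: "c = (U3, f3)" by (cases c)
  show ?thesis using ge_trans0[OF G, of U1 f1 U2 f2 U3 f3] ab bc 1 2 3 by simp
qed

lemma germ_eqI: assumes "G \<in> St X" "germ_eq X Fs res G (U, f) (V, g)"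
  shows "germ X Fs res G U f = germ X Fs res G V g"
proof -
  have "germ_eq X Fs res G (U, f) c \<longleftrightarrow> germ_eq X Fs res G (V, g) c" for c
    using ge_trans[OF assms(1)] ge_sym assms(2) by metis
  then have "germ_eq X Fs res G (U, f) = germ_eq X Fs res G (V, g)" by (rule ext)
  then show ?thesis unfolding germ_def by simp
qed

lemma germ_eqD: assumes "germ X Fs res G U f = germ X Fs res G V g" "V \<in> Gbar X G" "g \<in> Fs V"
  shows "germ_eq X Fs res G (U, f) (V, g)"
proof -
  have "(V, g) \<in> germ X Fs res G V g" unfolding germ_def using ge_refl[OF assms(2,3)] by simp
  then have "(V, g) \<in> germ X Fs res G U f" using assms(1) by simp
  then show ?thesis unfolding germ_def by simp
qed

lemma germ_open:
  assumes G: "G \<in> St X" and e: "germ_eq X Fs res G (U, f) (V, g)"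
  shows "\<exists>s\<in>G. \<forall>H\<in>Nq X s. germ_eq X Fs res H (U, f) (V, g)"
proof -
  have U: "U \<in> Gbar X G" "f \<in> Fs U" and V: "V \<in> Gbar X G" "g \<in> Fs V" using e unfolding germ_eq_iff by blast+
  obtain A where A: "A \<in> Gbar X G" "A \<subseteq> U \<inter> V" "dag X res A U f V g"
    using e unfolding germ_eq_iff by blast
  have "\<forall>H\<in>Nq X (Reg X A). germ_eq X Fs res H (U, f) (V, g)"
  proof
    fix H assume "H \<in> Nq X (Reg X A)"
    then have H: "H \<in> St X" "Reg X A \<in> H" by (auto simp: Nq_def)
    have AH: "A \<in> Gbar X H" using Gbar_I[OF Gbar_D(1)[OF A(1)] H(2)] .
    have UH: "U \<in> Gbar X H" using Gbar_mono[OF H(1) AH Gbar_D(1)[OF U(1)]] A(2) by blast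
    have VH: "V \<in> Gbar X H" using Gbar_mono[OF H(1) AH Gbar_D(1)[OF V(1)]] A(2) by blast
    show "germ_eq X Fs res H (U, f) (V, g)" unfolding germ_eq_iff using UH VH U(2) V(2) AH A(2,3) by blast
  qed
  then show ?thesis using Gbar_D(2)[OF A(1)] by blast
qed

lemma germ_sep:
  assumes G: "G \<in> St X" and U: "U \<in> Gbar X G" "f \<in> Fs U" and V: "V \<in> Gbar X G" "g \<in> Fs V"
    and ne: "\<not> germ_eq X Fs res G (U, f) (V, g)"
  shows "\<exists>s\<in>G. \<forall>H\<in>Nq X s. \<not> germ_eq X Fs res H (U, f) (V, g)"
proof -
  have UO: "U \<in> Opens X" and VO: "V \<in> Opens X" using U V Gbar_D by blast+
  define D where "D = {V'. V' \<in> Opens X \<and> V' \<subseteq> U \<inter> V \<and> res V' U f = res V' V g}"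
  define Om where "Om = \<Union>D"
  have oO: "openin X Om" unfolding Om_def D_def by (rule openin_Union) (auto simp: Opens_def)
  have OUV: "Om \<subseteq> U \<inter> V" unfolding Om_def D_def by blast
  show ?thesis
  proof (cases "Reg X Om \<in> G")
    case True
    have "Om \<noteq> {}"
    proof
      assume "Om = {}"
      then have "Reg X Om = {}" by (simp add: Reg_empty)
      then show False using True St_D(3)[OF G] by simp
    qed
    then have OG: "Om \<in> Gbar X G" using oO True by (intro Gbar_I Opens_I)
    have "dag X res Om U f V g" unfolding dag_def
    proof (intro allI impI)
      fix W assume W: "openin X W \<and> W \<noteq> {} \<and> W \<subseteq> Om"
      then obtain x where x: "x \<in> W" by blast
      then have "x \<in> Om" using W by blast
      then obtain V1 where V1: "V1 \<in> D" "x \<in> V1" unfolding Om_def by blast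
      have V1': "V1 \<in> Opens X" "V1 \<subseteq> U \<inter> V" "res V1 U f = res V1 V g" using V1(1) unfolding D_def by auto
      have "openin X (W \<inter> V1)" using W Opens_D(1)[OF V1'(1)] by (intro openin_Int) auto
      moreover have "W \<inter> V1 \<noteq> {}" using x V1(2) by blast
      ultimately have WO: "W \<inter> V1 \<in> Opens X" by (rule Opens_I)
      have "res (W \<inter> V1) U f = res (W \<inter> V1) V g"
        by (rule propag[OF UO VO U(2) V(2) V1' WO]) blast
      moreover have "W \<inter> V1 \<subseteq> U \<inter> V" "W \<inter> V1 \<subseteq> W" using V1'(2) by blast+
      ultimately show "\<exists>V'. V' \<in> Opens X \<and> V' \<subseteq> U \<inter> V \<and> res V' U f = res V' V g \<and> V' \<subseteq> W"
        using WO by blast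
    qed
    then have "germ_eq X Fs res G (U, f) (V, g)" unfolding germ_eq_iff using U V OG OUV by blast
    then show ?thesis using ne by blast
  next
    case False
    define s where "s = neg X (Reg X Om)"
    have sG: "s \<in> G" unfolding s_def using St_D(6)[OF G Reg_RO False] .
    have os: "openin X s" unfolding s_def by simp
    have sO: "s \<inter> Om = {}"
    proof -
      have "Om \<subseteq> Reg X Om" by (rule Reg_sub[OF oO])
      moreover have "s \<subseteq> topspace X - Reg X Om" unfolding s_def by (rule interior_of_subset)
      ultimately show ?thesis by blast
    qed
    have "\<forall>H\<in>Nq X s. \<not> germ_eq X Fs res H (U, f) (V, g)"
    proof (intro ballI notI)
      fix H assume H0: "H \<in> Nq X s" and e: "germ_eq X Fs res H (U, f) (V, g)"
      have H: "H \<in> St X" "s \<in> H" using H0 by (auto simp: Nq_def)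
      obtain A where A: "A \<in> Gbar X H" "A \<subseteq> U \<inter> V" "dag X res A U f V g"
        using e unfolding germ_eq_iff by blast
      have ne2: "A \<inter> s \<noteq> {}" by (rule St_meet_open[OF H(1) Gbar_D(2)[OF A(1)] H(2)])
      have "openin X (A \<inter> s)" using Opens_D(1)[OF Gbar_D(1)[OF A(1)]] os by (rule openin_Int)
      then have "openin X (A \<inter> s) \<and> A \<inter> s \<noteq> {} \<and> A \<inter> s \<subseteq> A" using ne2 by blast
      from A(3)[unfolded dag_def, rule_format, OF this]
      obtain V' where V': "V' \<in> Opens X" "V' \<subseteq> U \<inter> V" "res V' U f = res V' V g" "V' \<subseteq> A \<inter> s"
        by blast
      have "V' \<in> D" unfolding D_def using V'(1-3) by simp
      then have "V' \<subseteq> Om" unfolding Om_def by blast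
      then have "V' = {}" using V'(4) sO by blast
      then show False using Opens_D(2)[OF V'(1)] by blast
    qed
    then show ?thesis using sG by blast
  qed
qed

end

lemma Nq_anti: "t \<subseteq> q \<Longrightarrow> q \<in> RO X \<Longrightarrow> Nq X t \<subseteq> Nq X q"
  unfolding Nq_def using St_D(4) by blast

lemma Nq_D: "G \<in> Nq X q \<Longrightarrow> G \<in> St X" "G \<in> Nq X q \<Longrightarrow> q \<in> G"
  by (auto simp: Nq_def)

lemma Nq_I: "G \<in> St X \<Longrightarrow> q \<in> G \<Longrightarrow> G \<in> Nq X q"
  by (auto simp: Nq_def)

lemma Nq_Gbar: assumes "G \<in> Nq X q" "q \<subseteq> Reg X U" "U \<in> Opens X"
  shows "U \<in> Gbar X G"
proof -
  have "Reg X U \<in> G" by (rule St_D(4)[OF Nq_D(1)[OF assms(1)] Nq_D(2)[OF assms(1)] Reg_RO assms(2)])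
  with assms(3) show ?thesis by (rule Gbar_I)
qed

lemma fdot_eq: "fdot X Fs res U f G = fdot X Fs res V g H \<longleftrightarrow> G = H \<and> germ X Fs res G U f = germ X Fs res H V g"
  by (simp add: fdot_def)

lemma fst_fdot: "fst (fdot X Fs res U f G) = G"
  by (simp add: fdot_def)

context psh
begin

lemma B1_E:
  assumes "b \<in> B1 X Fs res"
  obtains q U f where "q \<in> RO X" "q \<subseteq> Reg X U" "U \<in> Opens X" "f \<in> Fs U" "b = fdot X Fs res U f ` Nq X q"
  using assms unfolding B1_def by blast

lemma B1_I:
  "q \<in> RO X \<Longrightarrow> q \<subseteq> Reg X U \<Longrightarrow> U \<in> Opens X \<Longrightarrow> f \<in> Fs U \<Longrightarrow> fdot X Fs res U f ` Nq X q \<in> B1 X Fs res"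
  unfolding B1_def by blast

lemma Lambda1_E:
  assumes "x \<in> Lambda1 X Fs res"
  obtains G U f where "G \<in> St X" "U \<in> Gbar X G" "f \<in> Fs U" "x = fdot X Fs res U f G"
  using assms unfolding Lambda1_def stalk_def fdot_def by blast

lemma Lambda1_I:
  "G \<in> St X \<Longrightarrow> U \<in> Gbar X G \<Longrightarrow> f \<in> Fs U \<Longrightarrow> fdot X Fs res U f G \<in> Lambda1 X Fs res"
  unfolding Lambda1_def stalk_def fdot_def by blast

lemma Lambda1_fst: "x \<in> Lambda1 X Fs res \<Longrightarrow> fst x \<in> St X"
  unfolding Lambda1_def by auto

lemma Union_B1: "\<Union>(B1 X Fs res) = Lambda1 X Fs res"
proof
  show "\<Union>(B1 X Fs res) \<subseteq> Lambda1 X Fs res"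
  proof
    fix x assume "x \<in> \<Union>(B1 X Fs res)"
    then obtain b where b: "b \<in> B1 X Fs res" "x \<in> b" by blast
    from b(1) obtain q U f where q: "q \<in> RO X" "q \<subseteq> Reg X U" "U \<in> Opens X" "f \<in> Fs U" "b = fdot X Fs res U f ` Nq X q"
      by (rule B1_E)
    then obtain G where G: "G \<in> Nq X q" "x = fdot X Fs res U f G" using b(2) by blast
    have "U \<in> Gbar X G" by (rule Nq_Gbar[OF G(1) q(2) q(3)])
    then show "x \<in> Lambda1 X Fs res" using Lambda1_I[OF Nq_D(1)[OF G(1)] _ q(4)] G(2) by simp
  qed
  show "Lambda1 X Fs res \<subseteq> \<Union>(B1 X Fs res)"
  proof
    fix x assume "x \<in> Lambda1 X Fs res"
    then obtain G U f where G: "G \<in> St X" "U \<in> Gbar X G" "f \<in> Fs U" "x = fdot X Fs res U f G"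
      by (rule Lambda1_E)
    have "fdot X Fs res U f ` Nq X (Reg X U) \<in> B1 X Fs res"
      by (rule B1_I[OF Reg_RO order_refl Gbar_D(1)[OF G(2)] G(3)])
    moreover have "G \<in> Nq X (Reg X U)" by (rule Nq_I[OF G(1) Gbar_D(2)[OF G(2)]])
    ultimately show "x \<in> \<Union>(B1 X Fs res)" using G(4) by blast
  qed
qed

lemma topspace_tau1: "topspace (tau1 X Fs res) = Lambda1 X Fs res"
  unfolding tau1_def by (simp add: Union_B1)


lemma core:
  assumes G: "G \<in> St X" and U: "U \<in> Gbar X G" "f \<in> Fs U" and b: "b \<in> B1 X Fs res"
    and x: "fdot X Fs res U f G \<in> b"
  shows "\<exists>t. t \<in> G \<and> (\<forall>G'\<in>Nq X t. fdot X Fs res U f G' \<in> b)"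
proof -
  from b obtain r V g where r: "r \<in> RO X" "r \<subseteq> Reg X V" "V \<in> Opens X" "g \<in> Fs V" "b = fdot X Fs res V g ` Nq X r"
    by (rule B1_E)
  have "fdot X Fs res U f G \<in> fdot X Fs res V g ` Nq X r" using x r(5) by simp
  then obtain H where H: "H \<in> Nq X r" "fdot X Fs res U f G = fdot X Fs res V g H" by (rule imageE) simp
  have HG: "G = H" using H(2) unfolding fdot_eq by (rule conjunct1)
  have ge: "germ X Fs res G U f = germ X Fs res H V g" using H(2) unfolding fdot_eq by (rule conjunct2)
  have VG: "V \<in> Gbar X G" unfolding HG by (rule Nq_Gbar[OF H(1) r(2) r(3)])
  have ge2: "germ X Fs res G U f = germ X Fs res G V g" using ge unfolding HG .
  have "germ_eq X Fs res G (U, f) (V, g)" by (rule germ_eqD[OF ge2 VG r(4)])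
  from germ_open[OF G this]
  obtain s where s: "s \<in> G" "\<forall>H\<in>Nq X s. germ_eq X Fs res H (U, f) (V, g)"
    by (elim bexE) (rule that)
  have rG: "r \<in> G" using Nq_D(2)[OF H(1)] unfolding HG .
  have sRO: "s \<in> RO X" using s(1) St_D(1)[OF G] by blast
  have "\<forall>G'\<in>Nq X (r \<inter> s). fdot X Fs res U f G' \<in> b"
  proof
    fix G' assume G': "G' \<in> Nq X (r \<inter> s)"
    have G'S: "G' \<in> St X" by (rule Nq_D(1)[OF G'])
    have rsG: "r \<inter> s \<in> G'" by (rule Nq_D(2)[OF G'])
    have "r \<in> G'" by (rule St_D(4)[OF G'S rsG r(1) Int_lower1])
    then have rG': "G' \<in> Nq X r" by (rule Nq_I[OF G'S])
    have "s \<in> G'" by (rule St_D(4)[OF G'S rsG sRO Int_lower2])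
    then have sG': "G' \<in> Nq X s" by (rule Nq_I[OF G'S])
    have "germ_eq X Fs res G' (U, f) (V, g)" using s(2) sG' by (rule bspec)
    then have "germ X Fs res G' U f = germ X Fs res G' V g" by (rule germ_eqI[OF G'S])
    then have "fdot X Fs res U f G' = fdot X Fs res V g G'" unfolding fdot_eq by simp
    moreover have "fdot X Fs res V g G' \<in> b" unfolding r(5) using rG' by (rule imageI)
    ultimately show "fdot X Fs res U f G' \<in> b" by simp
  qed
  moreover have "r \<inter> s \<in> G" by (rule St_D(5)[OF G rG s(1)])
  ultimately show ?thesis by blast
qed

lemma int_prop_B1: "int_prop (B1 X Fs res)"
  unfolding int_prop_def
proof (intro ballI)
  fix b1 b2 x assume b1: "b1 \<in> B1 X Fs res" and b2: "b2 \<in> B1 X Fs res" and x: "x \<in> b1 \<inter> b2"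
  from b1 obtain q U f where q: "q \<in> RO X" "q \<subseteq> Reg X U" "U \<in> Opens X" "f \<in> Fs U" "b1 = fdot X Fs res U f ` Nq X q"
    by (rule B1_E)
  have "x \<in> fdot X Fs res U f ` Nq X q" using x q(5) by simp
  then obtain G where G: "G \<in> Nq X q" "x = fdot X Fs res U f G" by (rule imageE) simp
  have GS: "G \<in> St X" by (rule Nq_D(1)[OF G(1)])
  have UG: "U \<in> Gbar X G" by (rule Nq_Gbar[OF G(1) q(2) q(3)])
  have xb2: "fdot X Fs res U f G \<in> b2" using x G(2) by simp
  from core[OF GS UG q(4) b2 xb2]
  obtain t where t: "t \<in> G" "\<forall>G'\<in>Nq X t. fdot X Fs res U f G' \<in> b2"
    by (elim exE conjE) (rule that)
  have tRO: "t \<in> RO X" using t(1) St_D(1)[OF GS] by blast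
  have qt: "q \<inter> t \<in> RO X" by (rule RO_Int[OF q(1) tRO])
  have qtU: "q \<inter> t \<subseteq> Reg X U" using q(2) by blast
  have bb: "fdot X Fs res U f ` Nq X (q \<inter> t) \<in> B1 X Fs res"
    by (rule B1_I[OF qt qtU q(3) q(4)])
  have "G \<in> Nq X (q \<inter> t)" by (rule Nq_I[OF GS St_D(5)[OF GS Nq_D(2)[OF G(1)] t(1)]])
  then have xin: "x \<in> fdot X Fs res U f ` Nq X (q \<inter> t)" unfolding G(2) by (rule imageI)
  have s1: "fdot X Fs res U f ` Nq X (q \<inter> t) \<subseteq> b1"
    unfolding q(5) by (rule image_mono[OF Nq_anti[OF Int_lower1 q(1)]])
  have s2: "fdot X Fs res U f ` Nq X (q \<inter> t) \<subseteq> b2"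
  proof
    fix y assume "y \<in> fdot X Fs res U f ` Nq X (q \<inter> t)"
    then obtain G' where G': "G' \<in> Nq X (q \<inter> t)" "y = fdot X Fs res U f G'" by (rule imageE) simp
    have "G' \<in> Nq X t" using Nq_anti[OF Int_lower2 tRO, of q] G'(1) by (rule subsetD)
    then show "y \<in> b2" using t(2) G'(2) by simp
  qed
  have "x \<in> fdot X Fs res U f ` Nq X (q \<inter> t) \<and> fdot X Fs res U f ` Nq X (q \<inter> t) \<subseteq> b1 \<inter> b2"
    using xin s1 s2 by (intro conjI Int_greatest)
  from this bb show "\<exists>b\<in>B1 X Fs res. x \<in> b \<and> b \<subseteq> b1 \<inter> b2" by (rule bexI)
qed

lemma openin_tau1_iff:
  "openin (tau1 X Fs res) S \<longleftrightarrow> (\<forall>x\<in>S. \<exists>b\<in>B1 X Fs res. x \<in> b \<and> b \<subseteq> S)"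
  unfolding tau1_def by (rule openin_gen_iff[OF int_prop_B1])

lemma B1_open: "b \<in> B1 X Fs res \<Longrightarrow> openin (tau1 X Fs res) b"
  unfolding tau1_def by (rule topology_generated_by_Basis)

lemma cont_fdot:
  assumes U: "U \<in> Opens X" "f \<in> Fs U"
  shows "continuous_map (subtopology (StoneTop X) (Nq X (Reg X U))) (tau1 X Fs res) (fdot X Fs res U f)"
  unfolding continuous_map_def
proof (intro conjI allI impI)
  show "fdot X Fs res U f \<in> topspace (subtopology (StoneTop X) (Nq X (Reg X U))) \<rightarrow> topspace (tau1 X Fs res)"
  proof
    fix G assume "G \<in> topspace (subtopology (StoneTop X) (Nq X (Reg X U)))"
    then have G: "G \<in> Nq X (Reg X U)" by simp
    have "U \<in> Gbar X G" by (rule Nq_Gbar[OF G order_refl U(1)])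
    then show "fdot X Fs res U f G \<in> topspace (tau1 X Fs res)"
      unfolding topspace_tau1 using Lambda1_I[OF Nq_D(1)[OF G] _ U(2)] by blast
  qed
  fix S assume S: "openin (tau1 X Fs res) S"
  let ?P = "{G \<in> topspace (subtopology (StoneTop X) (Nq X (Reg X U))). fdot X Fs res U f G \<in> S}"
  have Peq: "?P = {G \<in> Nq X (Reg X U). fdot X Fs res U f G \<in> S}"
    using Nq_sub[of X "Reg X U"] topspace_Stone[of X] by auto
  have "openin (StoneTop X) ?P"
    unfolding openin_Stone_iff
  proof
    fix G assume "G \<in> ?P"
    then have G: "G \<in> Nq X (Reg X U)" "fdot X Fs res U f G \<in> S" using Peq by auto
    have GS: "G \<in> St X" by (rule Nq_D(1)[OF G(1)])
    have UG: "U \<in> Gbar X G" by (rule Nq_Gbar[OF G(1) order_refl U(1)])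
    obtain b where b: "b \<in> B1 X Fs res" "fdot X Fs res U f G \<in> b" "b \<subseteq> S"
      using S G(2) unfolding openin_tau1_iff by blast
    obtain t where t: "t \<in> G" "\<forall>G'\<in>Nq X t. fdot X Fs res U f G' \<in> b"
      using core[OF GS UG U(2) b(1,2)] by blast
    have tRO: "t \<in> RO X" using t(1) St_D(1)[OF GS] by blast
    have q: "t \<inter> Reg X U \<in> RO X" by (rule RO_Int[OF tRO Reg_RO])
    have "G \<in> Nq X (t \<inter> Reg X U)" by (rule Nq_I[OF GS St_D(5)[OF GS t(1) Nq_D(2)[OF G(1)]]])
    moreover have "Nq X (t \<inter> Reg X U) \<subseteq> ?P"
    proof
      fix G' assume G': "G' \<in> Nq X (t \<inter> Reg X U)"
      have "G' \<in> Nq X t" using Nq_anti[OF Int_lower1 tRO] G' by blast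
      then have "fdot X Fs res U f G' \<in> S" using t(2) b(3) by blast
      moreover have "G' \<in> Nq X (Reg X U)" using Nq_anti[OF Int_lower2 Reg_RO] G' by blast
      ultimately show "G' \<in> ?P" using Peq by blast
    qed
    ultimately show "\<exists>q\<in>RO X. G \<in> Nq X q \<and> Nq X q \<subseteq> ?P" using q by blast
  qed
  moreover have "?P = ?P \<inter> Nq X (Reg X U)" using Peq by blast
  ultimately show "openin (subtopology (StoneTop X) (Nq X (Reg X U))) ?P"
    unfolding openin_subtopology by blast
qed

lemma cont_p1: "continuous_map (tau1 X Fs res) (StoneTop X) p1"
  unfolding continuous_map_def
proof (intro conjI allI impI)
  show "p1 \<in> topspace (tau1 X Fs res) \<rightarrow> topspace (StoneTop X)"
    unfolding topspace_tau1 topspace_Stone p1_def using Lambda1_fst by blast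
  fix S assume S: "openin (StoneTop X) S"
  let ?P = "{x \<in> topspace (tau1 X Fs res). p1 x \<in> S}"
  have Peq: "?P = {x \<in> Lambda1 X Fs res. fst x \<in> S}" unfolding topspace_tau1 p1_def by simp
  show "openin (tau1 X Fs res) ?P"
    unfolding openin_tau1_iff Peq
  proof
    fix x assume "x \<in> {x \<in> Lambda1 X Fs res. fst x \<in> S}"
    then have x: "x \<in> Lambda1 X Fs res" "fst x \<in> S" by simp_all
    from x(1) obtain G U f where G: "G \<in> St X" "U \<in> Gbar X G" "f \<in> Fs U" "x = fdot X Fs res U f G"
      by (rule Lambda1_E)
    have "G \<in> S" using x(2) unfolding G(4) fst_fdot .
    then have "\<exists>q\<in>RO X. G \<in> Nq X q \<and> Nq X q \<subseteq> S" using S unfolding openin_Stone_iff by (rule bspec[rotated])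
    then obtain q where q: "q \<in> RO X" "G \<in> Nq X q" "Nq X q \<subseteq> S" by (elim bexE conjE) (rule that)
    have qU: "q \<inter> Reg X U \<in> RO X" by (rule RO_Int[OF q(1) Reg_RO])
    have bb: "fdot X Fs res U f ` Nq X (q \<inter> Reg X U) \<in> B1 X Fs res"
      by (rule B1_I[OF qU Int_lower2 Gbar_D(1)[OF G(2)] G(3)])
    have "G \<in> Nq X (q \<inter> Reg X U)" by (rule Nq_I[OF G(1) St_D(5)[OF G(1) Nq_D(2)[OF q(2)] Gbar_D(2)[OF G(2)]]])
    then have xin: "x \<in> fdot X Fs res U f ` Nq X (q \<inter> Reg X U)" unfolding G(4) by (rule imageI)
    have sub: "fdot X Fs res U f ` Nq X (q \<inter> Reg X U) \<subseteq> {x \<in> Lambda1 X Fs res. fst x \<in> S}"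
    proof
      fix y assume "y \<in> fdot X Fs res U f ` Nq X (q \<inter> Reg X U)"
      then obtain G' where G': "G' \<in> Nq X (q \<inter> Reg X U)" "y = fdot X Fs res U f G'" by (rule imageE) simp
      have "U \<in> Gbar X G'" by (rule Nq_Gbar[OF G'(1) Int_lower2 Gbar_D(1)[OF G(2)]])
      then have yL: "y \<in> Lambda1 X Fs res" unfolding G'(2) by (rule Lambda1_I[OF Nq_D(1)[OF G'(1)] _ G(3)])
      have "G' \<in> Nq X q" using Nq_anti[OF Int_lower1 q(1)] G'(1) by (rule subsetD)
      then have "G' \<in> S" using q(3) by (rule rev_subsetD)
      then have "fst y \<in> S" unfolding G'(2) fst_fdot .
      then show "y \<in> {x \<in> Lambda1 X Fs res. fst x \<in> S}" using yL by simp
    qed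
    have "x \<in> fdot X Fs res U f ` Nq X (q \<inter> Reg X U) \<and> fdot X Fs res U f ` Nq X (q \<inter> Reg X U) \<subseteq> {x \<in> Lambda1 X Fs res. fst x \<in> S}"
      using xin sub by (rule conjI)
    from this bb show "\<exists>b\<in>B1 X Fs res. x \<in> b \<and> b \<subseteq> {x \<in> Lambda1 X Fs res. fst x \<in> S}" by (rule bexI)
  qed
qed

lemma compact_B1: assumes "b \<in> B1 X Fs res" shows "compactin (tau1 X Fs res) b"
proof -
  from assms obtain q U f where q: "q \<in> RO X" "q \<subseteq> Reg X U" "U \<in> Opens X" "f \<in> Fs U" "b = fdot X Fs res U f ` Nq X q"
    by (rule B1_E)
  have "compactin (StoneTop X) (Nq X q)" by (rule compact_Nq[OF q(1)])
  moreover have "Nq X q \<subseteq> Nq X (Reg X U)" by (rule Nq_anti[OF q(2) Reg_RO])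
  ultimately have "compactin (subtopology (StoneTop X) (Nq X (Reg X U))) (Nq X q)"
    by (simp add: compactin_subtopology)
  then have "compactin (tau1 X Fs res) (fdot X Fs res U f ` Nq X q)"
    by (rule image_compactin[OF _ cont_fdot[OF q(3) q(4)]])
  then show ?thesis using q(5) by simp
qed

end

context psh
begin

lemma fst_in_Nq_B:
  assumes "z \<in> fdot X Fs res U f ` Nq X q" shows "fst z \<in> Nq X q"
proof -
  from assms obtain G where "G \<in> Nq X q" "z = fdot X Fs res U f G" by (rule imageE) simp
  then show ?thesis by (simp add: fdot_def)
qed

lemma hausdorff_tau1: "Hausdorff_space (tau1 X Fs res)"
  unfolding Hausdorff_space_def
proof (intro allI impI, elim conjE)
  fix x y assume x0: "x \<in> topspace (tau1 X Fs res)" and y0: "y \<in> topspace (tau1 X Fs res)" and xy: "x \<noteq> y"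
  from x0 obtain G U f where G: "G \<in> St X" "U \<in> Gbar X G" "f \<in> Fs U" "x = fdot X Fs res U f G"
    unfolding topspace_tau1 by (rule Lambda1_E)
  from y0 obtain H V g where H: "H \<in> St X" "V \<in> Gbar X H" "g \<in> Fs V" "y = fdot X Fs res V g H"
    unfolding topspace_tau1 by (rule Lambda1_E)
  have UO: "U \<in> Opens X" by (rule Gbar_D(1)[OF G(2)])
  have VO: "V \<in> Opens X" by (rule Gbar_D(1)[OF H(2)])
  show "\<exists>A B. openin (tau1 X Fs res) A \<and> openin (tau1 X Fs res) B \<and> x \<in> A \<and> y \<in> B \<and> disjnt A B"
  proof (cases "G = H")
    case False
    from St_diff[OF G(1) H(1) False] obtain q where q: "q \<in> H" "q \<notin> G" by blast
    have qRO: "q \<in> RO X" using q(1) St_D(1)[OF H(1)] by blast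
    have nq: "neg X q \<in> G" by (rule St_D(6)[OF G(1) qRO q(2)])
    have nRO: "neg X q \<in> RO X" by (rule neg_RO[OF RO_open[OF qRO]])
    let ?A = "fdot X Fs res U f ` Nq X (neg X q \<inter> Reg X U)"
    let ?B = "fdot X Fs res V g ` Nq X (q \<inter> Reg X V)"
    have oA: "openin (tau1 X Fs res) ?A"
      by (rule B1_open[OF B1_I[OF RO_Int[OF nRO Reg_RO] Int_lower2 UO G(3)]])
    have oB: "openin (tau1 X Fs res) ?B"
      by (rule B1_open[OF B1_I[OF RO_Int[OF qRO Reg_RO] Int_lower2 VO H(3)]])
    have "G \<in> Nq X (neg X q \<inter> Reg X U)" by (rule Nq_I[OF G(1) St_D(5)[OF G(1) nq Gbar_D(2)[OF G(2)]]])
    then have xA: "x \<in> ?A" unfolding G(4) by (rule imageI)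
    have "H \<in> Nq X (q \<inter> Reg X V)" by (rule Nq_I[OF H(1) St_D(5)[OF H(1) q(1) Gbar_D(2)[OF H(2)]]])
    then have yB: "y \<in> ?B" unfolding H(4) by (rule imageI)
    have "disjnt ?A ?B"
      unfolding disjnt_def
    proof (rule equals0I)
      fix z assume z: "z \<in> ?A \<inter> ?B"
      have "fst z \<in> Nq X (neg X q \<inter> Reg X U)" using z by (intro fst_in_Nq_B) blast
      then have 1: "neg X q \<in> fst z" "fst z \<in> St X" using Nq_D St_D(4) nRO by (metis Int_lower1)+
      have "fst z \<in> Nq X (q \<inter> Reg X V)" using z by (intro fst_in_Nq_B) blast
      then have 2: "q \<in> fst z" using Nq_D St_D(4) qRO by (metis Int_lower1)
      show False using St_not_both[OF 1(2) 2 1(1)] .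
    qed
    then show ?thesis using oA oB xA yB by blast
  next
    case True
    have ne: "germ X Fs res G U f \<noteq> germ X Fs res G V g"
      using xy unfolding G(4) H(4) True fdot_eq by simp
    have VG: "V \<in> Gbar X G" using H(2) True by simp
    have gV: "g \<in> Fs V" by (rule H(3))
    have nge: "\<not> germ_eq X Fs res G (U, f) (V, g)"
      using germ_eqI[OF G(1)] ne by blast
    from germ_sep[OF G(1) G(2) G(3) VG gV nge]
    obtain s where s: "s \<in> G" "\<forall>H\<in>Nq X s. \<not> germ_eq X Fs res H (U, f) (V, g)"
      by (elim bexE) (rule that)
    have sRO: "s \<in> RO X" using s(1) St_D(1)[OF G(1)] by blast
    let ?A = "fdot X Fs res U f ` Nq X (s \<inter> Reg X U)"
    let ?B = "fdot X Fs res V g ` Nq X (s \<inter> Reg X V)"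
    have oA: "openin (tau1 X Fs res) ?A"
      by (rule B1_open[OF B1_I[OF RO_Int[OF sRO Reg_RO] Int_lower2 UO G(3)]])
    have oB: "openin (tau1 X Fs res) ?B"
      by (rule B1_open[OF B1_I[OF RO_Int[OF sRO Reg_RO] Int_lower2 VO H(3)]])
    have "G \<in> Nq X (s \<inter> Reg X U)" by (rule Nq_I[OF G(1) St_D(5)[OF G(1) s(1) Gbar_D(2)[OF G(2)]]])
    then have xA: "x \<in> ?A" unfolding G(4) by (rule imageI)
    have "G \<in> Nq X (s \<inter> Reg X V)" by (rule Nq_I[OF G(1) St_D(5)[OF G(1) s(1) Gbar_D(2)[OF VG]]])
    then have yB: "y \<in> ?B" unfolding H(4) True[symmetric] by (rule imageI)
    have "disjnt ?A ?B"
      unfolding disjnt_def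
    proof (rule equals0I)
      fix z assume z: "z \<in> ?A \<inter> ?B"
      from z obtain K1 where K1: "K1 \<in> Nq X (s \<inter> Reg X U)" "z = fdot X Fs res U f K1" by blast
      from z obtain K2 where K2: "K2 \<in> Nq X (s \<inter> Reg X V)" "z = fdot X Fs res V g K2" by blast
      have "fdot X Fs res U f K1 = fdot X Fs res V g K2" using K1(2) K2(2) by simp
      then have K12: "K1 = K2" and ge: "germ X Fs res K1 U f = germ X Fs res K2 V g"
        unfolding fdot_eq by (rule conjunct1, rule conjunct2)
      have VK: "V \<in> Gbar X K1" unfolding K12 by (rule Nq_Gbar[OF K2(1) Int_lower2 VO])
      have "germ X Fs res K1 U f = germ X Fs res K1 V g" using ge unfolding K12 .
      then have "germ_eq X Fs res K1 (U, f) (V, g)" by (rule germ_eqD[OF _ VK gV])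
      moreover have "K1 \<in> Nq X s"
        using Nq_anti[OF Int_lower1 sRO] K1(1) by (rule subsetD)
      ultimately show False using s(2) by blast
    qed
    then show ?thesis using oA oB xA yB by blast
  qed
qed

lemma fiber_sub: "G \<in> St X \<Longrightarrow> {G} \<times> stalk X Fs res G \<subseteq> Lambda1 X Fs res"
  unfolding Lambda1_def by blast

lemma fiber_discrete:
  assumes G: "G \<in> St X"
  shows "subtopology (tau1 X Fs res) ({G} \<times> stalk X Fs res G) = discrete_topology ({G} \<times> stalk X Fs res G)"
proof -
  let ?F = "{G} \<times> stalk X Fs res G"
  have "discrete_topology ?F = subtopology (tau1 X Fs res) ?F"
    unfolding discrete_topology_unique
  proof (intro conjI ballI)
    show "topspace (subtopology (tau1 X Fs res) ?F) = ?F"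
      using fiber_sub[OF G] unfolding topspace_subtopology topspace_tau1 by blast
    fix x assume x: "x \<in> ?F"
    then obtain c where c: "x = (G, c)" "c \<in> stalk X Fs res G" by blast
    then obtain U f where U: "U \<in> Gbar X G" "f \<in> Fs U" "c = germ X Fs res G U f"
      unfolding stalk_def by blast
    have xe: "x = fdot X Fs res U f G" using c(1) U(3) by (simp add: fdot_def)
    let ?b = "fdot X Fs res U f ` Nq X (Reg X U)"
    have ob: "openin (tau1 X Fs res) ?b"
      by (rule B1_open[OF B1_I[OF Reg_RO order_refl Gbar_D(1)[OF U(1)] U(2)]])
    have "G \<in> Nq X (Reg X U)" by (rule Nq_I[OF G Gbar_D(2)[OF U(1)]])
    then have xb: "x \<in> ?b" unfolding xe by (rule imageI)
    have "?b \<inter> ?F = {x}"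
    proof
      show "?b \<inter> ?F \<subseteq> {x}"
      proof
        fix y assume y: "y \<in> ?b \<inter> ?F"
        then obtain G' where G': "y = fdot X Fs res U f G'" by blast
        have "y \<in> ?F" using y by (rule IntD2)
        then have "fst y = G" by (simp add: mem_Times_iff)
        then have "G' = G" using G' fst_fdot by metis
        then show "y \<in> {x}" using G' xe by simp
      qed
      show "{x} \<subseteq> ?b \<inter> ?F" using xb x by blast
    qed
    then show "openin (subtopology (tau1 X Fs res) ?F) {x}"
      unfolding openin_subtopology using ob by metis
  qed
  then show ?thesis by simp
qed

lemma fiber_closed:
  assumes G: "G \<in> St X"
  shows "closedin (tau1 X Fs res) ({G} \<times> stalk X Fs res G)"
proof -
  let ?F = "{G} \<times> stalk X Fs res G"
  have oS: "openin (StoneTop X) (St X - {G})"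
    unfolding openin_Stone_iff
  proof
    fix H assume H: "H \<in> St X - {G}"
    then have "G \<noteq> H" "H \<in> St X" by auto
    from St_diff[OF G this(2) this(1)] obtain q where q: "q \<in> H" "q \<notin> G" by blast
    have "q \<in> RO X" using q(1) St_D(1)[OF \<open>H \<in> St X\<close>] by blast
    moreover have "H \<in> Nq X q" by (rule Nq_I[OF \<open>H \<in> St X\<close> q(1)])
    moreover have "Nq X q \<subseteq> St X - {G}" using q(2) Nq_sub[of X q] Nq_D(2) by blast
    ultimately show "\<exists>q\<in>RO X. H \<in> Nq X q \<and> Nq X q \<subseteq> St X - {G}" by blast
  qed
  have "openin (tau1 X Fs res) {x \<in> topspace (tau1 X Fs res). p1 x \<in> St X - {G}}"
    by (rule openin_continuous_map_preimage[OF cont_p1 oS])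
  moreover have "{x \<in> topspace (tau1 X Fs res). p1 x \<in> St X - {G}} = topspace (tau1 X Fs res) - ?F"
  proof
    show "{x \<in> topspace (tau1 X Fs res). p1 x \<in> St X - {G}} \<subseteq> topspace (tau1 X Fs res) - ?F"
      unfolding p1_def by auto
    show "topspace (tau1 X Fs res) - ?F \<subseteq> {x \<in> topspace (tau1 X Fs res). p1 x \<in> St X - {G}}"
    proof
      fix x assume x: "x \<in> topspace (tau1 X Fs res) - ?F"
      then have xL: "x \<in> Lambda1 X Fs res" "x \<notin> ?F" unfolding topspace_tau1 by auto
      then obtain G' c where c: "x = (G', c)" "G' \<in> St X" "c \<in> stalk X Fs res G'"
        unfolding Lambda1_def by blast
      have "G' \<noteq> G" using c xL(2) by blast
      then show "x \<in> {x \<in> topspace (tau1 X Fs res). p1 x \<in> St X - {G}}"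
        using c x unfolding p1_def by auto
    qed
  qed
  ultimately have "openin (tau1 X Fs res) (topspace (tau1 X Fs res) - ?F)" by simp
  moreover have "?F \<subseteq> topspace (tau1 X Fs res)" unfolding topspace_tau1 by (rule fiber_sub[OF G])
  ultimately show ?thesis unfolding closedin_def by blast
qed

lemma p1_fdot_image: "p1 ` (fdot X Fs res U f ` A) = A"
  unfolding p1_def fdot_def by (simp add: image_image)

lemma loc_sec:
  assumes "U \<in> Opens X" "f \<in> Fs U"
  shows "local_section (tau1 X Fs res) (StoneTop X) p1 (Nq X (Reg X U)) (fdot X Fs res U f)"
  unfolding local_section_def
proof (intro conjI ballI)
  show "openin (StoneTop X) (Nq X (Reg X U))" by (rule Nq_open[OF Reg_RO])
  show "continuous_map (subtopology (StoneTop X) (Nq X (Reg X U))) (tau1 X Fs res) (fdot X Fs res U f)"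
    by (rule cont_fdot[OF assms])
  fix z show "p1 (fdot X Fs res U f z) = z" unfolding p1_def by (rule fst_fdot)
qed

lemma etale_tau1: "etale (tau1 X Fs res) (StoneTop X) p1"
  unfolding etale_def
proof (intro conjI ballI)
  show "continuous_map (tau1 X Fs res) (StoneTop X) p1" by (rule cont_p1)
  fix e assume "e \<in> topspace (tau1 X Fs res)"
  then obtain G U f where G: "G \<in> St X" "U \<in> Gbar X G" "f \<in> Fs U" "e = fdot X Fs res U f G"
    unfolding topspace_tau1 by (rule Lambda1_E)
  have UO: "U \<in> Opens X" by (rule Gbar_D(1)[OF G(2)])
  let ?N = "Nq X (Reg X U)"
  let ?W = "fdot X Fs res U f ` ?N"
  have oW: "openin (tau1 X Fs res) ?W" by (rule B1_open[OF B1_I[OF Reg_RO order_refl UO G(3)]])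
  have "G \<in> ?N" by (rule Nq_I[OF G(1) Gbar_D(2)[OF G(2)]])
  then have eW: "e \<in> ?W" unfolding G(4) by (rule imageI)
  have pW: "p1 ` ?W = ?N" by (rule p1_fdot_image)
  have oN: "openin (StoneTop X) ?N" by (rule Nq_open[OF Reg_RO])
  have "homeomorphic_maps (subtopology (tau1 X Fs res) ?W) (subtopology (StoneTop X) ?N) p1 (fdot X Fs res U f)"
    unfolding homeomorphic_maps_def
  proof (intro conjI ballI)
    show "continuous_map (subtopology (tau1 X Fs res) ?W) (subtopology (StoneTop X) ?N) p1"
    proof (rule continuous_map_into_subtopology)
      show "continuous_map (subtopology (tau1 X Fs res) ?W) (StoneTop X) p1"
        by (rule continuous_map_from_subtopology[OF cont_p1])
      show "p1 \<in> topspace (subtopology (tau1 X Fs res) ?W) \<rightarrow> ?N"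
        using pW by auto
    qed
    show "continuous_map (subtopology (StoneTop X) ?N) (subtopology (tau1 X Fs res) ?W) (fdot X Fs res U f)"
    proof (rule continuous_map_into_subtopology)
      show "continuous_map (subtopology (StoneTop X) ?N) (tau1 X Fs res) (fdot X Fs res U f)"
        by (rule cont_fdot[OF UO G(3)])
      show "fdot X Fs res U f \<in> topspace (subtopology (StoneTop X) ?N) \<rightarrow> ?W"
        by auto
    qed
    fix x assume "x \<in> topspace (subtopology (tau1 X Fs res) ?W)"
    then have "x \<in> ?W" by simp
    then obtain z where z: "x = fdot X Fs res U f z" by blast
    show "fdot X Fs res U f (p1 x) = x" unfolding z p1_def fst_fdot ..
  next
    fix y show "p1 (fdot X Fs res U f y) = y" unfolding p1_def by (rule fst_fdot)
  qed
  then have "homeomorphic_map (subtopology (tau1 X Fs res) ?W) (subtopology (StoneTop X) ?N) p1"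
    by (rule homeomorphic_maps_imp_map)
  then show "\<exists>W. openin (tau1 X Fs res) W \<and> e \<in> W \<and> openin (StoneTop X) (p1 ` W) \<and>
        homeomorphic_map (subtopology (tau1 X Fs res) W) (subtopology (StoneTop X) (p1 ` W)) p1"
    using oW eW oN pW by metis
qed

lemma loc_compact: "locally_compact_space (tau1 X Fs res)"
  unfolding locally_compact_space_def
proof
  fix x assume "x \<in> topspace (tau1 X Fs res)"
  then have "x \<in> \<Union>(B1 X Fs res)" unfolding topspace_tau1 Union_B1 .
  then obtain b where b: "b \<in> B1 X Fs res" "x \<in> b" by blast
  show "\<exists>U K. openin (tau1 X Fs res) U \<and> compactin (tau1 X Fs res) K \<and> x \<in> U \<and> U \<subseteq> K"
    using B1_open[OF b(1)] compact_B1[OF b(1)] b(2) by blast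
qed

end

theorem mainTheorem10:
  fixes X :: "'a topology" and Fs :: "'a set \<Rightarrow> 'b set" and res :: "'a set \<Rightarrow> 'a set \<Rightarrow> 'b \<Rightarrow> 'b"
  assumes "presheaf X Fs res"
  shows "topspace (tau1 X Fs res) = Lambda1 X Fs res
    \<and> is_base (tau1 X Fs res) (B1 X Fs res)
    \<and> (\<forall>b\<in>B1 X Fs res. compactin (tau1 X Fs res) b)
    \<and> locally_compact_space (tau1 X Fs res)
    \<and> (\<forall>G\<in>St X. subtopology (tau1 X Fs res) ({G} \<times> stalk X Fs res G) = discrete_topology ({G} \<times> stalk X Fs res G)
         \<and> closedin (tau1 X Fs res) ({G} \<times> stalk X Fs res G))
    \<and> continuous_map (tau1 X Fs res) (StoneTop X) p1
    \<and> (\<forall>U\<in>Opens X. \<forall>f\<in>Fs U.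
         local_section (tau1 X Fs res) (StoneTop X) p1 (Nq X (Reg X U)) (fdot X Fs res U f))
    \<and> etale (tau1 X Fs res) (StoneTop X) p1
    \<and> Hausdorff_space (tau1 X Fs res)
    \<and> zero_dimensional (tau1 X Fs res)
    \<and> completely_regular_space (tau1 X Fs res)
    \<and> ((\<exists>G\<in>St X. infinite (stalk X Fs res G)) \<longrightarrow> \<not> compact_space (tau1 X Fs res))"
proof -
  interpret psh X Fs res using assms by (rule psh.intro)
  have base: "is_base (tau1 X Fs res) (B1 X Fs res)"
    unfolding tau1_def by (rule is_base_gen[OF int_prop_B1])
  have cpt: "\<forall>b\<in>B1 X Fs res. compactin (tau1 X Fs res) b" using compact_B1 by blast
  have zd: "zero_dimensional (tau1 X Fs res)"
    unfolding zero_dimensional_def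
    using base compactin_imp_closedin[OF hausdorff_tau1] cpt by blast
  have cr: "completely_regular_space (tau1 X Fs res)"
    by (rule locally_compact_regular_imp_completely_regular_space[OF loc_compact disjI1[OF hausdorff_tau1]])
  have nc: "(\<exists>G\<in>St X. infinite (stalk X Fs res G)) \<longrightarrow> \<not> compact_space (tau1 X Fs res)"
  proof (intro impI notI)
    assume "\<exists>G\<in>St X. infinite (stalk X Fs res G)" and c: "compact_space (tau1 X Fs res)"
    then obtain G where G: "G \<in> St X" "infinite (stalk X Fs res G)" by blast
    let ?F = "{G} \<times> stalk X Fs res G"
    have "compactin (tau1 X Fs res) ?F" by (rule closedin_compact_space[OF c fiber_closed[OF G(1)]])
    then have "compact_space (subtopology (tau1 X Fs res) ?F)" by (simp add: compactin_subspace)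
    then have "compact_space (discrete_topology ?F)" unfolding fiber_discrete[OF G(1)] .
    then have "finite ?F" by (simp add: compact_space_discrete_topology)
    then have "finite (snd ` ?F)" by (rule finite_imageI)
    moreover have "snd ` ?F = stalk X Fs res G" by force
    ultimately show False using G(2) by simp
  qed
  show ?thesis
    using topspace_tau1 base cpt loc_compact fiber_discrete fiber_closed cont_p1 loc_sec etale_tau1
      hausdorff_tau1 zd cr nc by blast
qed

end
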